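(* Fix $n,m\in\mathbb N$. If $L\subseteq\mathbb R^{nm}$ is an origin-symmetric convex body and $v\in\mathbb S^{n-1}$, then $\bar S_v^*(L^\circ)\subseteq(\bar S_v L)^\circ$.
   Context: Write points of $\mathbb R^{nm}$ as $x=(x_1,\dots,x_m)$ with $x_i\in\mathbb R^n$. For $v\in\mathbb R^n$ put $x^tv=(\langle x_1,v\rangle,\dots,\langle x_m,v\rangle)\in\mathbb R^m$, and for $s=(s_1,\dots,s_m)\in\mathbb R^m$ put $vs^t=(s_1v,\dots,s_mv)\in\mathbb R^{nm}$. For a convex body $L\subseteq\mathbb R^{nm}$ the $m$th-order fiber symmetrization and its adjoint are \[\bar S_vL=\Big\{x+v\big(\tfrac{s-r}{2}\big)^t:\ x^tv=0,\ s,r\in\mathbb R^m,\ x+vs^t\in L,\ x+vr^t\in L\Big\},\] \[\bar S^*_vL=\Big\{\tfrac{x-y}{2}+vs^t:\ x^tv=y^tv=0,\ s\in\mathbb R^m,\ x+vs^t\in L,\ y+vs^t\in L\Big\}.\] $L^\circ=\{z:\langle z,w\rangle\le1\ \forall w\in L\}$ denotes the polar. *)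

theory Defs
  imports "HOL-Analysis.Analysis"
begin

text \<open>Points of R^{nm} are modelled as x :: real^'n^'m, i.e. x = (x_1,...,x_m) with
  x_i = x$i in R^n. The inner product on real^'n^'m is the standard one on R^{nm}.\<close>

definition xtv :: "real^'n^'m \<Rightarrow> real^'n \<Rightarrow> real^'m" where
  "xtv x v = (\<chi> i. inner (x $ i) v)"

definition vst :: "real^'n \<Rightarrow> real^'m \<Rightarrow> real^'n^'m" where
  "vst v s = (\<chi> i. (s $ i) *\<^sub>R v)"

definition convex_body :: "'a::euclidean_space set \<Rightarrow> bool" where
  "convex_body K \<longleftrightarrow> convex K \<and> compact K \<and> interior K \<noteq> {}"

definition polar :: "'a::real_inner set \<Rightarrow> 'a set" where
  "polar L = {z. \<forall>w\<in>L. inner z w \<le> 1}"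

definition fiber_symm :: "real^'n \<Rightarrow> (real^'n^'m) set \<Rightarrow> (real^'n^'m) set" where
  "fiber_symm v L = {x + vst v ((1/2) *\<^sub>R (s - r)) | x s r.
      xtv x v = 0 \<and> x + vst v s \<in> L \<and> x + vst v r \<in> L}"

definition fiber_symm_adj :: "real^'n \<Rightarrow> (real^'n^'m) set \<Rightarrow> (real^'n^'m) set" where
  "fiber_symm_adj v L = {(1/2) *\<^sub>R (x - y) + vst v s | x y s.
      xtv x v = 0 \<and> xtv y v = 0 \<and> x + vst v s \<in> L \<and> y + vst v s \<in> L}"

end

theory Submission
  imports Defs
begin

lemma inner_vst_left: "inner (vst v s) x = inner s (xtv x v)"
proof -
  have "inner (vst v s) x = (\<Sum>i\<in>UNIV. inner (vst v s $ i) (x $ i))" by (rule inner_vec_def)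
  also have "\<dots> = (\<Sum>i\<in>UNIV. s $ i * inner (xtv x v $ i) 1)"
    by (simp add: vst_def xtv_def inner_commute)
  also have "\<dots> = inner s (xtv x v)" by (simp add: inner_vec_def[of s] mult.commute)
  finally show ?thesis .
qed

lemma inner_vst_vst: "inner (vst v s) (vst v t) = inner s t * inner v v"
proof -
  have "inner (vst v s) (vst v t) = (\<Sum>i\<in>UNIV. inner (vst v s $ i) (vst v t $ i))" by (rule inner_vec_def)
  also have "\<dots> = (\<Sum>i\<in>UNIV. (s $ i * t $ i) * inner v v)"
    by (simp add: vst_def mult.commute mult.left_commute)
  also have "\<dots> = inner s t * inner v v" by (simp add: inner_vec_def[of s] sum_distrib_right)
  finally show ?thesis .
qed

lemma key:
  fixes a b :: "real^'n^'m"
  assumes "xtv a v = 0" "xtv b v = 0" "norm v = 1"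
  shows "inner (a + vst v p) (b + vst v q) = inner a b + inner p q"
proof -
  have vv: "inner v v = 1" using assms(3) by (simp add: norm_eq_sqrt_inner)
  have "inner (a + vst v p) (b + vst v q) = inner a b + inner a (vst v q) + inner (vst v p) b + inner (vst v p) (vst v q)"
    by (simp add: inner_add_left inner_add_right)
  also have "\<dots> = inner a b + inner p q"
  proof -
    have "inner a (vst v q) = 0" using assms(1) by (simp add: inner_commute[of a] inner_vst_left)
    moreover have "inner (vst v p) b = 0" using assms(2) by (simp add: inner_vst_left)
    moreover have "inner (vst v p) (vst v q) = inner p q" using vv by (simp only: inner_vst_vst)
    ultimately show ?thesis by simp
  qed
  finally show ?thesis .
qed

lemma xtv_lin: "xtv (c *\<^sub>R (x - y)) v = c *\<^sub>R (xtv x v - xtv y v)" "xtv (- x) v = - xtv x v"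
  by (simp_all add: xtv_def vec_eq_iff inner_diff_left)

lemma vst_neg: "vst v (- r) = - vst v r"
  by (simp add: vst_def vec_eq_iff)

theorem proposition4p6:
  fixes L :: "(real^'n^'m) set" and v :: "real^'n"
  assumes "convex_body L" and "\<And>x. x \<in> L \<Longrightarrow> - x \<in> L" and "norm v = 1"
  shows "fiber_symm_adj v (polar L) \<subseteq> polar (fiber_symm v L)"
proof
  fix z assume "z \<in> fiber_symm_adj v (polar L)"
  then obtain x y s where z: "z = (1/2) *\<^sub>R (x - y) + vst v s" and xv: "xtv x v = 0" and yv: "xtv y v = 0"
    and xs: "x + vst v s \<in> polar L" and ys: "y + vst v s \<in> polar L"
    unfolding fiber_symm_adj_def by blast
  show "z \<in> polar (fiber_symm v L)"
    unfolding polar_def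
  proof (clarify)
    fix w assume "w \<in> fiber_symm v L"
    then obtain x' s' r' where w: "w = x' + vst v ((1/2) *\<^sub>R (s' - r'))" and x'v: "xtv x' v = 0"
      and s': "x' + vst v s' \<in> L" and r': "x' + vst v r' \<in> L"
      unfolding fiber_symm_def by blast
    have r'': "(- x') + vst v (- r') \<in> L" using assms(2)[OF r'] by (simp add: vst_neg)
    have h1: "inner x x' + inner s s' \<le> 1"
      using xs s' key[OF xv x'v assms(3)] unfolding polar_def by force
    have h2: "inner y (- x') + inner s (- r') \<le> 1"
      using ys r'' key[OF yv _ assms(3), of "- x'"] x'v unfolding polar_def
      by (force simp: xtv_lin)
    have az: "xtv ((1/2) *\<^sub>R (x - y)) v = 0" using xv yv by (simp add: xtv_lin)
    have "inner z w = inner ((1/2) *\<^sub>R (x - y)) x' + inner s ((1/2) *\<^sub>R (s' - r'))"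
      unfolding z w by (rule key[OF az x'v assms(3)])
    also have "\<dots> = (1/2) * ((inner x x' + inner s s') + (inner y (- x') + inner s (- r')))"
      by (simp add: inner_diff_left inner_diff_right algebra_simps)
    finally show "inner z w \<le> 1" using add_mono[OF h1 h2] by simp
  qed
qed

end
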